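(* Let $s\ge 2$ be an even constant and $\epsilon$ a constant with $0<\epsilon<1/(2s-1)$. The $(1+1)$~IA$^{hyp}$ finds an optimal solution of any instance of the class $G^*_\epsilon$ (with $n$ even) in $O(n^2)$ expected fitness function evaluations.
   Context: Partition problem: an instance consists of $n$ jobs with positive processing times $p_1,\dots,p_n$. A solution is $x\in\{0,1\}^n$ (job $i$ on machine $M_1$ if $x_i=0$, on $M_2$ if $x_i=1$), with makespan $f(x)=\max\{\sum_i p_ix_i,\sum_i p_i(1-x_i)\}$ to be minimised. The class $G^*_\epsilon$: instances with an even number $n$ of jobs, an even number $s=\Theta(1)$ of large jobs, and processing times $p_i=\frac{1}{2s-1}-\frac{\epsilon}{2s}$ for $i\le s$ and $p_i=\frac{s-1}{n-s}\left(\frac{1}{2s-1}+\frac{\epsilon}{2(s-1)}\right)$ for $s<i\le n$, where $0<\epsilon<1/(2s-1)$ is an arbitrarily small constant. The $(1+1)$~IA$^{hyp}$ (minimisation): initialise $x$ uniformly at random and evaluate it. In each iteration: $y:=x$, $F:=\{1,\dots,n\}$; while $F\ne\emptyset$ and $f(y)\ge f(x)$: pick $i\in F$ uniformly at random, remove it from $F$, flip $y_i$, evaluate $f(y)$. Then if $f(y)\le f(x)$ set $x:=y$. Asymptotics are as $n\to\infty$. *)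

theory Defs
  imports "HOL-Probability.Probability"
begin

text \<open>Jobs are indexed 0..n-1 (paper: 1..n). A solution is a bool list of length n;
  entry True means the job is on machine M2, False means M1.\<close>

definition makespan :: "(nat \<Rightarrow> real) \<Rightarrow> bool list \<Rightarrow> real" where
  "makespan p x = max (\<Sum>i<length x. if x ! i then p i else 0)
                      (\<Sum>i<length x. if x ! i then 0 else p i)"

definition flip :: "bool list \<Rightarrow> nat \<Rightarrow> bool list" where
  "flip y i = y[i := \<not> y ! i]"

text \<open>Inner hypermutation loop: current parent x, mutant y, set F of not yet flipped
  positions. Returns the final mutant and the number of fitness evaluations performed.\<close>
function hyp_loop :: "(bool list \<Rightarrow> real) \<Rightarrow> bool list \<Rightarrow> bool list \<Rightarrow> nat set
    \<Rightarrow> (bool list \<times> nat) pmf" where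
  "hyp_loop f x y F =
     (if F = {} \<or> \<not> finite F \<or> f y < f x then return_pmf (y, 0)
      else bind_pmf (pmf_of_set F)
        (\<lambda>i. map_pmf (\<lambda>(z, k). (z, Suc k)) (hyp_loop f x (flip y i) (F - {i}))))"
  by auto
termination
  by (relation "Wellfounded.measure (\<lambda>(f, x, y, F). card F)")
     (auto simp: set_pmf_of_set card_gt_0_iff)

definition ia_step :: "(bool list \<Rightarrow> real) \<Rightarrow> bool list \<Rightarrow> (bool list \<times> nat) pmf" where
  "ia_step f x = map_pmf (\<lambda>(y, k). (if f y \<le> f x then y else x, k))
                         (hyp_loop f x x {0..<length x})"

definition opt_value :: "(bool list \<Rightarrow> real) \<Rightarrow> nat \<Rightarrow> real" where
  "opt_value f n = Min (f ` {x. length x = n})"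

text \<open>Expected number of further fitness evaluations, starting from parent x, until the
  parent is an optimal solution: the least fixed point of the Bellman equation
  (the standard characterisation of expected hitting costs of a Markov chain).\<close>
definition remaining_evals :: "(bool list \<Rightarrow> real) \<Rightarrow> nat \<Rightarrow> bool list \<Rightarrow> ennreal" where
  "remaining_evals f n = lfp (\<lambda>T x. if f x = opt_value f n then 0
        else \<integral>\<^sup>+ yk. (of_nat (snd yk) + T (fst yk)) \<partial>measure_pmf (ia_step f x))"

text \<open>Expected number of fitness evaluations (including the initial one) until an optimal
  solution is found, starting from a uniformly random initial solution.\<close>
definition expected_runtime :: "(nat \<Rightarrow> real) \<Rightarrow> nat \<Rightarrow> ennreal" where
  "expected_runtime p n = 1 + (\<integral>\<^sup>+ x. remaining_evals (makespan p) n x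
        \<partial>measure_pmf (pmf_of_set {x. length x = n}))"

text \<open>The instance of class G*_eps with n jobs and s large jobs (0-indexed: i < s large).\<close>
definition G_star :: "nat \<Rightarrow> real \<Rightarrow> nat \<Rightarrow> nat \<Rightarrow> real" where
  "G_star s eps n i = (if i < s then 1 / (2 * real s - 1) - eps / (2 * real s)
     else (real s - 1) / (real n - real s) * (1 / (2 * real s - 1) + eps / (2 * (real s - 1))))"

end

theory Submission
  imports Defs
begin


declare hyp_loop.simps[simp del]

definition flips :: "bool list \<Rightarrow> nat set \<Rightarrow> bool list" where
  "flips y Q = map (\<lambda>j. if j \<in> Q then \<not> y!j else y!j) [0..<length y]"

lemma length_flips[simp]: "length (flips y Q) = length y"
  by (simp add: flips_def)

lemma flips_empty[simp]: "flips y {} = y"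
  by (rule nth_equalityI) (auto simp: flips_def)

lemma flips_flip: "i < length y \<Longrightarrow> i \<notin> Q \<Longrightarrow> flips (flip y i) Q = flips y (insert i Q)"
  by (rule nth_equalityI) (auto simp: flips_def flip_def nth_list_update)

lemma hyp_loop_set:
  "finite F \<Longrightarrow> zk \<in> set_pmf (hyp_loop f x y F) \<Longrightarrow> length (fst zk) = length y \<and> snd zk \<le> card F"
proof (induction f x y F arbitrary: zk rule: hyp_loop.induct)
  case (1 f x y F)
  show ?case
  proof (cases "F = {} \<or> \<not> finite F \<or> f y < f x")
    case True
    then show ?thesis using 1(3) by (subst (asm) hyp_loop.simps) auto
  next
    case False
    then have "F \<noteq> {}" "finite F" by auto
    from 1(3) False obtain i z k where i: "i \<in> F" and zk: "(z,k) \<in> set_pmf (hyp_loop f x (flip y i) (F - {i}))"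
      and e: "zk = (z, Suc k)"
      by (subst (asm) hyp_loop.simps) (auto simp: set_pmf_of_set)
    have IH: "length z = length (flip y i) \<and> k \<le> card (F - {i})"
      using 1(1)[OF False _ _ zk] i \<open>finite F\<close> \<open>F \<noteq> {}\<close> by (auto simp: set_pmf_of_set)
    have "card F > 0" using i \<open>finite F\<close> card_gt_0_iff by blast
    then have "card (F - {i}) < card F" using i \<open>finite F\<close> by simp
    then show ?thesis using IH e by (auto simp: flip_def)
  qed
qed

lemma measure_bind_pmf_of_set:
  assumes "finite F" "F \<noteq> {}"
  shows "measure (bind_pmf (pmf_of_set F) N) X = (\<Sum>i\<in>F. measure (N i) X) / card F"
proof -
  have "ennreal (measure (bind_pmf (pmf_of_set F) N) X) = emeasure (bind_pmf (pmf_of_set F) N) X"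
    by (simp add: measure_pmf.emeasure_eq_measure)
  also have "\<dots> = (\<Sum>i\<in>F. emeasure (N i) X) / card F"
    using assms by (simp add: nn_integral_pmf_of_set)
  also have "\<dots> = (\<Sum>i\<in>F. ennreal (measure (N i) X)) / card F"
    by (simp add: measure_pmf.emeasure_eq_measure)
  also have "\<dots> = ennreal ((\<Sum>i\<in>F. measure (N i) X) / card F)"
    using assms by (simp add: sum_ennreal ennreal_of_nat_eq_real_of_nat divide_ennreal card_gt_0_iff sum_nonneg)
  finally show ?thesis by (simp add: divide_nonneg_nonneg sum_nonneg)
qed

lemma double_count:
  assumes "finite F"
  shows "(\<Sum>i\<in>F. card {Q'. Q' \<subseteq> F - {i} \<and> card Q' = t \<and> P (insert i Q')})
         = Suc t * card {Q. Q \<subseteq> F \<and> card Q = Suc t \<and> P Q}"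
proof -
  define QQ where "QQ = {Q. Q \<subseteq> F \<and> card Q = Suc t \<and> P Q}"
  have finQQ: "finite QQ" unfolding QQ_def using assms
    by (rule finite_subset[rotated, OF finite_Pow_iff[THEN iffD2]]) auto
  have c1: "card {Q'. Q' \<subseteq> F - {i} \<and> card Q' = t \<and> P (insert i Q')} = card {Q\<in>QQ. i \<in> Q}"
    if i: "i \<in> F" for i
  proof (rule bij_betw_same_card[of "insert i"])
    show "bij_betw (insert i) {Q'. Q' \<subseteq> F - {i} \<and> card Q' = t \<and> P (insert i Q')} {Q \<in> QQ. i \<in> Q}"
    proof (rule bij_betw_byWitness[of _ "\<lambda>Q. Q - {i}"])
      show "\<forall>a\<in>{Q'. Q' \<subseteq> F - {i} \<and> card Q' = t \<and> P (insert i Q')}. insert i a - {i} = a" by auto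
      show "\<forall>a'\<in>{Q \<in> QQ. i \<in> Q}. insert i (a' - {i}) = a'" by auto
      show "insert i ` {Q'. Q' \<subseteq> F - {i} \<and> card Q' = t \<and> P (insert i Q')} \<subseteq> {Q \<in> QQ. i \<in> Q}"
      proof
        fix Q assume "Q \<in> insert i ` {Q'. Q' \<subseteq> F - {i} \<and> card Q' = t \<and> P (insert i Q')}"
        then obtain Q' where "Q = insert i Q'" "Q' \<subseteq> F - {i}" "card Q' = t" "P (insert i Q')" by auto
        moreover have "finite Q'" using \<open>Q' \<subseteq> F - {i}\<close> assms finite_subset by blast
        moreover have "i \<notin> Q'" using \<open>Q' \<subseteq> F - {i}\<close> by auto
        ultimately show "Q \<in> {Q \<in> QQ. i \<in> Q}" using i unfolding QQ_def by auto
      qed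
      show "(\<lambda>Q. Q - {i}) ` {Q \<in> QQ. i \<in> Q} \<subseteq> {Q'. Q' \<subseteq> F - {i} \<and> card Q' = t \<and> P (insert i Q')}"
      proof
        fix Q' assume "Q' \<in> (\<lambda>Q. Q - {i}) ` {Q \<in> QQ. i \<in> Q}"
        then obtain Q where Q: "Q' = Q - {i}" "Q \<in> QQ" "i \<in> Q" by auto
        then have "finite Q" unfolding QQ_def using assms finite_subset by blast
        with Q show "Q' \<in> {Q'. Q' \<subseteq> F - {i} \<and> card Q' = t \<and> P (insert i Q')}"
          unfolding QQ_def by (auto simp: insert_absorb)
      qed
    qed
  qed
  have "(\<Sum>i\<in>F. card {Q'. Q' \<subseteq> F - {i} \<and> card Q' = t \<and> P (insert i Q')})
      = (\<Sum>i\<in>F. card {Q\<in>QQ. i \<in> Q})" using c1 by (rule sum.cong[OF refl])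
  also have "\<dots> = (\<Sum>i\<in>F. \<Sum>Q\<in>QQ. if i \<in> Q then 1 else 0)"
    using finQQ by (simp add: sum.If_cases Int_def)
  also have "\<dots> = (\<Sum>Q\<in>QQ. \<Sum>i\<in>F. if i \<in> Q then 1 else 0)" by (rule sum.swap)
  also have "\<dots> = (\<Sum>Q\<in>QQ. Suc t)"
  proof (rule sum.cong[OF refl])
    fix Q assume "Q \<in> QQ"
    then have "Q \<subseteq> F" "card Q = Suc t" unfolding QQ_def by auto
    then show "(\<Sum>i\<in>F. if i \<in> Q then 1 else 0) = Suc t"
      using assms by (simp add: sum.If_cases Int_absorb1)
  qed
  also have "\<dots> = Suc t * card QQ" by simp
  finally show ?thesis unfolding QQ_def .
qed

lemma card_good_le:
  assumes "finite F"
  shows "card {Q. Q \<subseteq> F \<and> card Q = t \<and> P Q} \<le> card F choose t"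
proof -
  have "card {Q. Q \<subseteq> F \<and> card Q = t \<and> P Q} \<le> card {Q. Q \<subseteq> F \<and> card Q = t}"
    using assms by (intro card_mono) auto
  also have "\<dots> = card F choose t" using n_subsets[OF assms] .
  finally show ?thesis .
qed

lemma hyp_U:
  assumes "finite F" "t \<le> card F" "F \<subseteq> {..<length y}"
  shows "measure_pmf.prob (hyp_loop f x y F) {zk. f (fst zk) < f x}
         \<ge> real (card {Q. Q \<subseteq> F \<and> card Q = t \<and> f (flips y Q) < f x}) / real (card F choose t)"
  using assms
proof (induction t arbitrary: y F)
  case 0
  show ?case
  proof (cases "f y < f x")
    case True
    then have "hyp_loop f x y F = return_pmf (y, 0)" by (subst hyp_loop.simps) auto
    moreover have "card {Q. Q \<subseteq> F \<and> card Q = 0 \<and> f (flips y Q) < f x} \<le> 1"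
      using card_good_le[OF 0(1), of 0] by simp
    ultimately show ?thesis using True by simp
  next
    case False
    have e: "{Q. Q \<subseteq> F \<and> card Q = 0 \<and> f (flips y Q) < f x} = {}"
      using False 0(1) by (auto dest: finite_subset)
    show ?thesis unfolding e by simp
  qed
next
  case (Suc t)
  let ?G = "{Q. Q \<subseteq> F \<and> card Q = Suc t \<and> f (flips y Q) < f x}"
  have Cpos: "card F choose Suc t > 0" using Suc.prems by simp
  show ?case
  proof (cases "f y < f x")
    case True
    then have "hyp_loop f x y F = return_pmf (y, 0)" by (subst hyp_loop.simps) auto
    moreover have "card ?G \<le> card F choose Suc t"
      using card_good_le[OF Suc.prems(1)] .
    ultimately show ?thesis using True Cpos by (simp add: divide_le_eq_1)
  next
    case False
    have Fne: "F \<noteq> {}" using Suc.prems(2) by auto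
    define N where "N = card F"
    have Npos: "N > 0" unfolding N_def using Fne Suc.prems(1) by (simp add: card_gt_0_iff)
    have hl: "hyp_loop f x y F = bind_pmf (pmf_of_set F)
        (\<lambda>i. map_pmf (\<lambda>(z, k). (z, Suc k)) (hyp_loop f x (flip y i) (F - {i})))"
      using False Fne Suc.prems(1) by (subst hyp_loop.simps) auto
    define cnt where "cnt i = card {Q'. Q' \<subseteq> F - {i} \<and> card Q' = t \<and> f (flips (flip y i) Q') < f x}" for i
    have step: "measure_pmf.prob (hyp_loop f x (flip y i) (F - {i})) {zk. f (fst zk) < f x} \<ge> real (cnt i) / real ((N - 1) choose t)"
      if i: "i \<in> F" for i
    proof -
      have "card (F - {i}) = N - 1" using i Suc.prems(1) N_def by simp
      moreover have "t \<le> card (F - {i})" using i Suc.prems(1,2) by simp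
      moreover have "F - {i} \<subseteq> {..<length (flip y i)}" using Suc.prems(3) by (auto simp: flip_def)
      ultimately show ?thesis using Suc.IH[of "F - {i}" "flip y i"] Suc.prems(1) unfolding cnt_def by simp
    qed
    have cnt_eq: "cnt i = card {Q'. Q' \<subseteq> F - {i} \<and> card Q' = t \<and> f (flips y (insert i Q')) < f x}"
      if i: "i \<in> F" for i
      unfolding cnt_def
    proof (rule arg_cong[where f=card], rule Collect_cong)
      fix Q' show "(Q' \<subseteq> F - {i} \<and> card Q' = t \<and> f (flips (flip y i) Q') < f x) =
          (Q' \<subseteq> F - {i} \<and> card Q' = t \<and> f (flips y (insert i Q')) < f x)"
      proof -
        have "Q' \<subseteq> F - {i} \<Longrightarrow> flips (flip y i) Q' = flips y (insert i Q')"
          using flips_flip[of i y Q'] i Suc.prems(3) by auto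
        then show ?thesis by auto
      qed
    qed
    have sumcnt: "(\<Sum>i\<in>F. cnt i) = Suc t * card ?G"
    proof -
      have "(\<Sum>i\<in>F. cnt i) = (\<Sum>i\<in>F. card {Q'. Q' \<subseteq> F - {i} \<and> card Q' = t \<and> f (flips y (insert i Q')) < f x})"
        using cnt_eq by (rule sum.cong[OF refl])
      also have "\<dots> = Suc t * card ?G" by (rule double_count[OF Suc.prems(1)])
      finally show ?thesis .
    qed
    have "measure_pmf.prob (hyp_loop f x y F) {zk. f (fst zk) < f x}
        = (\<Sum>i\<in>F. measure_pmf.prob (hyp_loop f x (flip y i) (F - {i})) {zk. f (fst zk) < f x}) / real N"
      unfolding hl N_def
      by (subst measure_bind_pmf_of_set[OF Suc.prems(1) Fne])
         (simp add: vimage_def case_prod_beta)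
    also have "\<dots> \<ge> (\<Sum>i\<in>F. real (cnt i) / real ((N - 1) choose t)) / real N"
      using step Npos by (intro divide_right_mono sum_mono) auto
    finally have "measure_pmf.prob (hyp_loop f x y F) {zk. f (fst zk) < f x} \<ge> real (\<Sum>i\<in>F. cnt i) / real ((N - 1) choose t) / real N"
      by (simp add: sum_divide_distrib)
    moreover have "real (\<Sum>i\<in>F. cnt i) / real ((N - 1) choose t) / real N = real (card ?G) / real (N choose Suc t)"
    proof -
      have e: "N * ((N - 1) choose t) = (N choose Suc t) * Suc t"
        using Suc_times_binomial_eq[of "N - 1" t] Npos by simp
      have "real N * ((N - 1) choose t) = real (N choose Suc t) * Suc t"
        by (metis e of_nat_mult)
      have r1: "real (\<Sum>i\<in>F. cnt i) = real (Suc t) * real (card ?G)" by (metis sumcnt of_nat_mult)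
      have "real (\<Sum>i\<in>F. cnt i) / real ((N - 1) choose t) / real N
          = real (\<Sum>i\<in>F. cnt i) / (real N * real ((N - 1) choose t))"
        by (simp add: divide_divide_eq_left mult.commute)
      also have "\<dots> = (real (Suc t) * real (card ?G)) / (real (N choose Suc t) * real (Suc t))"
        using r1 \<open>real N * ((N - 1) choose t) = real (N choose Suc t) * Suc t\<close> by simp
      also have "\<dots> = real (card ?G) / real (N choose Suc t)"
        by simp
      finally show ?thesis .
    qed
    ultimately show ?thesis using N_def by simp
  qed
qed

lemma ia_step_set:
  assumes "zk \<in> set_pmf (ia_step f x)"
  shows "length (fst zk) = length x \<and> snd zk \<le> length x \<and> f (fst zk) \<le> f x"
proof -
  from assms obtain y k where yk: "(y, k) \<in> set_pmf (hyp_loop f x x {0..<length x})"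
    and e: "zk = (if f y \<le> f x then y else x, k)"
    unfolding ia_step_def by auto
  from hyp_loop_set[OF _ yk] have "length y = length x" "k \<le> length x" by auto
  then show ?thesis using e by auto
qed

lemma ia_step_prob:
  "measure_pmf.prob (ia_step f x) {zk. f (fst zk) < f x}
   = measure_pmf.prob (hyp_loop f x x {0..<length x}) {zk. f (fst zk) < f x}"
proof -
  have e: "(\<lambda>(y, k). (if f y \<le> f x then y else x, k)) -` {zk. f (fst zk) < f x} = {zk. f (fst zk) < f x}"
    by (auto split: if_splits)
  show ?thesis unfolding ia_step_def measure_map_pmf e by (rule refl)
qed

lemma remaining_evals_bound:
  fixes f :: "bool list \<Rightarrow> real" and w :: "real \<Rightarrow> real" and n :: nat and x :: "bool list"
  defines "V \<equiv> f ` {z. length z = n}"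
  defines "W \<equiv> \<lambda>x. \<Sum>v\<in>{v\<in>V. opt_value f n < v \<and> v \<le> f x}. w v"
  assumes wnn: "\<And>v. w v \<ge> 0"
  assumes key: "\<And>x. length x = n \<Longrightarrow> f x \<noteq> opt_value f n \<Longrightarrow>
     real n \<le> w (f x) * measure_pmf.prob (ia_step f x) {zk. f (fst zk) < f x}"
  assumes x: "length x = n"
  shows "remaining_evals f n x \<le> ennreal (W x)"
proof -
  define T0 where "T0 x = (if length x = n then ennreal (W x) else \<top>)" for x
  have finV: "finite V" unfolding V_def
    using finite_lists_length_eq[of "UNIV :: bool set" n] by simp
  have Wnn: "W z \<ge> 0" for z unfolding W_def using wnn by (simp add: sum_nonneg)
  have optle: "opt_value f n \<le> f z" if "length z = n" for z
    unfolding opt_value_def using that finV V_def by (intro Min_le) auto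
  have "(\<lambda>T x. if f x = opt_value f n then 0
        else \<integral>\<^sup>+ yk. (of_nat (snd yk) + T (fst yk)) \<partial>measure_pmf (ia_step f x)) T0 \<le> T0"
  proof (rule le_funI)
    fix x :: "bool list"
    show "(if f x = opt_value f n then 0
        else \<integral>\<^sup>+ yk. (of_nat (snd yk) + T0 (fst yk)) \<partial>measure_pmf (ia_step f x)) \<le> T0 x"
    proof (cases "f x = opt_value f n \<or> length x \<noteq> n")
      case True
      then show ?thesis unfolding T0_def by auto
    next
      case False
      then have xn: "length x = n" and nopt: "f x \<noteq> opt_value f n" by auto
      define E where "E = {zk :: bool list \<times> nat. f (fst zk) < f x}"
      define W1 where "W1 = (\<Sum>v\<in>{v\<in>V. opt_value f n < v \<and> v < f x}. w v)"
      have fxV: "f x \<in> V" using xn V_def by auto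
      have gt: "opt_value f n < f x" using optle[OF xn] nopt by simp
      have Wx: "W x = W1 + w (f x)"
      proof -
        have "{v\<in>V. opt_value f n < v \<and> v \<le> f x} = insert (f x) {v\<in>V. opt_value f n < v \<and> v < f x}"
          using fxV gt by auto
        then show ?thesis unfolding W_def W1_def using finV by simp
      qed
      have W1nn: "W1 \<ge> 0" unfolding W1_def using wnn by (simp add: sum_nonneg)
      define g where "g zk = real n + W1 + w (f x) * indicator (- E) zk" for zk
      have bound: "of_nat (snd zk) + T0 (fst zk) \<le> ennreal (g zk)" if zk: "zk \<in> set_pmf (ia_step f x)" for zk
      proof -
        from ia_step_set[OF zk] xn have l: "length (fst zk) = n" "snd zk \<le> n" "f (fst zk) \<le> f x" by auto
        have "W (fst zk) \<le> W1 + w (f x) * indicator (- E) zk"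
        proof (cases "zk \<in> E")
          case True
          then have "f (fst zk) < f x" unfolding E_def by simp
          then have "W (fst zk) \<le> W1" unfolding W_def W1_def using finV wnn
            by (intro sum_mono2) auto
          then show ?thesis using True by simp
        next
          case False
          then have "f (fst zk) = f x" using l unfolding E_def by simp
          then have "W (fst zk) = W x" unfolding W_def by simp
          then show ?thesis using False Wx by simp
        qed
        then have "real (snd zk) + W (fst zk) \<le> g zk" unfolding g_def using l by simp
        then have "ennreal (real (snd zk) + W (fst zk)) \<le> ennreal (g zk)" by (rule ennreal_leI)
        then show ?thesis unfolding T0_def using l Wnn
          by (simp add: ennreal_plus[symmetric] ennreal_of_nat_eq_real_of_nat del: ennreal_plus)
      qed
      have "(\<integral>\<^sup>+ yk. (of_nat (snd yk) + T0 (fst yk)) \<partial>measure_pmf (ia_step f x))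
          \<le> (\<integral>\<^sup>+ yk. ennreal (g yk) \<partial>measure_pmf (ia_step f x))"
        by (intro nn_integral_mono_AE) (simp add: AE_measure_pmf_iff bound)
      also have "\<dots> = ennreal (\<integral> yk. g yk \<partial>measure_pmf (ia_step f x))"
      proof (rule nn_integral_eq_integral)
        show "integrable (measure_pmf (ia_step f x)) g"
          unfolding g_def using W1nn wnn[of "f x"]
          by (intro measure_pmf.integrable_const_bound[where B="real n + W1 + w (f x)"])
             (auto intro!: AE_I2 simp: indicator_def)
        show "AE zk in measure_pmf (ia_step f x). 0 \<le> g zk"
          unfolding g_def using W1nn wnn by (auto intro!: AE_I2)
      qed
      also have "(\<integral> yk. g yk \<partial>measure_pmf (ia_step f x))
          = real n + W1 + w (f x) * measure_pmf.prob (ia_step f x) (- E)"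
        unfolding g_def
        by (subst Bochner_Integration.integral_add) (auto simp: measure_pmf.emeasure_finite less_top[symmetric])
      also have "\<dots> = real n + W1 + w (f x) * (1 - measure_pmf.prob (ia_step f x) E)"
        using measure_pmf.prob_compl[of E "ia_step f x"] by (simp add: Compl_eq_Diff_UNIV)
      also have "\<dots> \<le> ennreal (W x)"
        using key[OF xn nopt] Wx unfolding E_def by (intro ennreal_leI) (simp add: algebra_simps)
      finally show ?thesis unfolding T0_def using False by simp
    qed
  qed
  then have "remaining_evals f n \<le> T0"
    unfolding remaining_evals_def by (rule lfp_lowerbound)
  then show ?thesis using x unfolding T0_def le_fun_def by (metis (full_types))
qed

locale inst =
  fixes s n :: nat and A B :: real and p :: "nat \<Rightarrow> real"
  assumes p_eq: "\<And>i. p i = (if i < s then A else B)"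
    and A_pos: "A > 0" and B_pos: "B > 0"
    and s_even: "even s" and n_even: "even n" and s_lt_n: "s < n" and s_ge: "s \<ge> 2"
begin

definition m :: nat where "m = n - s"
definition e :: "bool list \<Rightarrow> nat \<Rightarrow> real" where "e x i = (if x ! i then - p i else p i)"
definition sig :: "bool list \<Rightarrow> real" where "sig x = (\<Sum>i<n. e x i)"
definition tot :: real where "tot = (\<Sum>i<n. p i)"

lemma p_pos: "p i > 0" using A_pos B_pos p_eq[of i] by auto

lemma abs_e: "\<bar>e x i\<bar> = p i" using p_pos[of i] by (simp add: e_def)

lemma makespan_eq:
  assumes "length x = n"
  shows "makespan p x = (tot + \<bar>sig x\<bar>) / 2"
proof -
  define M2 where "M2 = (\<Sum>i<n. if x ! i then p i else 0)"
  define M1 where "M1 = (\<Sum>i<n. if x ! i then 0 else p i)"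
  have "M1 + M2 = tot" unfolding M1_def M2_def tot_def by (simp add: sum.distrib[symmetric] if_distrib cong: if_cong)
  moreover have "M1 - M2 = sig x" unfolding M1_def M2_def sig_def e_def
    by (simp add: sum_subtractf[symmetric]) (rule sum.cong, auto)
  moreover have "makespan p x = max M2 M1" unfolding makespan_def M1_def M2_def using assms by simp
  ultimately show ?thesis by (simp add: max_def abs_if field_simps)
qed

lemma sig_flips:
  assumes "length x = n" "Q \<subseteq> {..<n}"
  shows "sig (flips x Q) = sig x - 2 * (\<Sum>i\<in>Q. e x i)"
proof -
  have fin: "finite Q" using assms(2) finite_subset by blast
  have "sig (flips x Q) = (\<Sum>i<n. if i \<in> Q then - e x i else e x i)"
    unfolding sig_def using assms by (intro sum.cong) (auto simp: e_def flips_def)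
  also have "\<dots> = (\<Sum>i<n. e x i) - 2 * (\<Sum>i<n. if i \<in> Q then e x i else 0)"
    unfolding sum_distrib_left sum_subtractf[symmetric] by (rule sum.cong) auto
  also have "(\<Sum>i<n. if i \<in> Q then e x i else 0) = (\<Sum>i\<in>Q. e x i)"
    using assms(2) by (simp add: sum.If_cases Int_absorb1)
  finally show ?thesis unfolding sig_def .
qed

end




lemma par_aux: "even ((a::nat) + b) \<Longrightarrow> 2 * (a div 2 + a mod 2) + b = 2 * (b div 2 + b mod 2) + a"
proof (cases "even a")
  case True
  assume h: "even (a + b)"
  then have "even b" using True by simp
  then show ?thesis using True by (simp add: even_two_times_div_two)
next
  case False
  assume h: "even (a + b)"
  then have "odd b" using False by simp
  then have "2 * (b div 2) + 1 = b" "2 * (a div 2) + 1 = a" using False by (simp_all add: odd_two_times_div_two_succ)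
  then show ?thesis using False \<open>odd b\<close> by (simp add: odd_iff_mod_2_eq_one)
qed

lemma sum_choose_le: "(\<Sum>k\<le>t. (s::nat) choose k) \<le> 2 ^ s"
proof -
  have "(\<Sum>k\<le>t. s choose k) = (\<Sum>k\<in>{..t} \<inter> {..s}. s choose k)"
    by (rule sum.mono_neutral_right) auto
  also have "\<dots> \<le> (\<Sum>k\<le>s. s choose k)" by (rule sum_mono2) auto
  also have "\<dots> = 2 ^ s" by (rule choose_row_sum)
  finally show ?thesis .
qed

lemma bin_prod_bound: "(a + b) choose q \<le> (q + 1) * ((a choose (a div 2)) * (b choose (b div 2)))"
proof -
  have "(a + b) choose q = (\<Sum>k\<le>q. (a choose k) * (b choose (q - k)))" by (rule vandermonde[symmetric])
  also have "\<dots> \<le> (\<Sum>k\<le>q. (a choose (a div 2)) * (b choose (b div 2)))"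
    by (intro sum_mono mult_mono binomial_maximum) auto
  also have "\<dots> = (q + 1) * ((a choose (a div 2)) * (b choose (b div 2)))" by simp
  finally show ?thesis .
qed

lemma bin_total_bound:
  "(s + (a + b)) choose t \<le> 2 ^ s * ((t + 1) * ((a choose (a div 2)) * (b choose (b div 2))))"
proof -
  let ?M = "(a choose (a div 2)) * (b choose (b div 2))"
  have "(s + (a + b)) choose t = (\<Sum>k\<le>t. (s choose k) * ((a + b) choose (t - k)))" by (rule vandermonde[symmetric])
  also have "\<dots> \<le> (\<Sum>k\<le>t. (s choose k) * ((t + 1) * ?M))"
  proof (intro sum_mono mult_left_mono)
    fix k assume "k \<in> {..t}"
    have "(a + b) choose (t - k) \<le> (t - k + 1) * ?M" by (rule bin_prod_bound)
    also have "\<dots> \<le> (t + 1) * ?M" by (intro mult_right_mono) auto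
    finally show "(a + b) choose (t - k) \<le> (t + 1) * ?M" .
  qed auto
  also have "\<dots> = (\<Sum>k\<le>t. s choose k) * ((t + 1) * ?M)" by (simp add: sum_distrib_right)
  also have "\<dots> \<le> 2 ^ s * ((t + 1) * ?M)" by (intro mult_right_mono sum_choose_le) auto
  finally show ?thesis .
qed

lemma choose_half_mod: "a choose (a div 2 + a mod 2) = a choose (a div 2)"
proof (cases "even a")
  case True then show ?thesis by simp
next
  case False
  then have "a div 2 + a mod 2 = a - a div 2" by presburger
  then show ?thesis using binomial_symmetric[of "a div 2" a] by simp
qed

locale inst_x = inst +
  fixes x :: "bool list"
  assumes len: "length x = n" and nz: "sig x \<noteq> 0"
begin

definition sg :: real where "sg = sgn (sig x)"
definition ep :: "nat \<Rightarrow> real" where "ep i = sg * e x i"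
definition D :: real where "D = \<bar>sig x\<bar>"
definition LP where "LP = {i\<in>{0..<s}. ep i > 0}"
definition LM where "LM = {i\<in>{0..<s}. ep i < 0}"
definition SP where "SP = {i\<in>{s..<n}. ep i > 0}"
definition SM where "SM = {i\<in>{s..<n}. ep i < 0}"

lemma sg_sq: "sg * sg = 1" using nz by (simp add: sg_def sgn_if)

lemma ep_cases: "ep i = p i \<or> ep i = - p i"
  using nz by (auto simp: ep_def sg_def e_def sgn_if)

lemma D_pos: "D > 0" using nz by (simp add: D_def)

lemma D_sum: "D = (\<Sum>i<n. ep i)"
  unfolding D_def ep_def sum_distrib_left[symmetric] sig_def[symmetric] sg_def
  by (simp add: abs_sgn)

lemma sig_flips_ep:
  assumes "Q \<subseteq> {..<n}"
  shows "sig (flips x Q) = sg * (D - 2 * (\<Sum>i\<in>Q. ep i))"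
proof -
  have "sig (flips x Q) = sig x - 2 * (\<Sum>i\<in>Q. e x i)" using sig_flips[OF len assms] .
  also have "\<dots> = sg * (D - 2 * (\<Sum>i\<in>Q. ep i))"
    unfolding ep_def sum_distrib_left[symmetric] D_def sg_def
    using nz by (simp add: algebra_simps sgn_if)
  finally show ?thesis .
qed

lemma improve_iff:
  assumes "Q \<subseteq> {..<n}"
  shows "makespan p (flips x Q) < makespan p x \<longleftrightarrow> \<bar>D - 2 * (\<Sum>i\<in>Q. ep i)\<bar> < D"
proof -
  have "sig (flips x Q) = sig x - 2 * (\<Sum>i\<in>Q. e x i)" using sig_flips[OF len assms] .
  also have "\<dots> = sg * (D - 2 * (\<Sum>i\<in>Q. ep i))"
    unfolding ep_def sum_distrib_left[symmetric] D_def sg_def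
    using nz by (simp add: algebra_simps sgn_if)
  finally have "\<bar>sig (flips x Q)\<bar> = \<bar>D - 2 * (\<Sum>i\<in>Q. ep i)\<bar>"
    using nz by (simp add: sg_def abs_mult sgn_if)
  moreover have "makespan p x = (tot + D) / 2" using makespan_eq[OF len] D_def by simp
  moreover have "makespan p (flips x Q) = (tot + \<bar>sig (flips x Q)\<bar>) / 2"
    using makespan_eq[of "flips x Q"] len by simp
  ultimately show ?thesis by (simp add: field_simps) linarith
qed

lemma LP_ep: "i \<in> LP \<Longrightarrow> ep i = A" and LM_ep: "i \<in> LM \<Longrightarrow> ep i = - A"
  and SP_ep: "i \<in> SP \<Longrightarrow> ep i = B" and SM_ep: "i \<in> SM \<Longrightarrow> ep i = - B"
  using ep_cases[of i] p_eq[of i] A_pos B_pos by (auto simp: LP_def LM_def SP_def SM_def)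

lemma sum_LP: "Q \<subseteq> LP \<Longrightarrow> (\<Sum>i\<in>Q. ep i) = A * card Q"
  and sum_LM: "Q \<subseteq> LM \<Longrightarrow> (\<Sum>i\<in>Q. ep i) = - A * card Q"
  and sum_SP: "Q \<subseteq> SP \<Longrightarrow> (\<Sum>i\<in>Q. ep i) = B * card Q"
  and sum_SM: "Q \<subseteq> SM \<Longrightarrow> (\<Sum>i\<in>Q. ep i) = - B * card Q"
  using LP_ep LM_ep SP_ep SM_ep by (auto simp: subset_iff)

lemma fin: "finite LP" "finite LM" "finite SP" "finite SM"
  by (auto simp: LP_def LM_def SP_def SM_def)

lemma L_split: "{0..<s} = LP \<union> LM" "LP \<inter> LM = {}"
  and S_split: "{s..<n} = SP \<union> SM" "SP \<inter> SM = {}"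
  using ep_cases p_pos by (auto simp: LP_def LM_def SP_def SM_def) (smt (verit))+

lemma card_L: "card LP + card LM = s"
  using card_Un_disjoint[OF fin(1,2) L_split(2)] L_split(1) by (metis card_atLeastLessThan diff_zero)

lemma card_S: "card SP + card SM = m"
  using card_Un_disjoint[OF fin(3,4) S_split(2)] S_split(1) by (metis card_atLeastLessThan m_def)

lemma D_counts: "D = A * card LP - A * card LM + B * card SP - B * card SM"
proof -
  have "{..<n} = {0..<s} \<union> {s..<n}" using s_lt_n by auto
  then have "D = (\<Sum>i\<in>{0..<s}. ep i) + (\<Sum>i\<in>{s..<n}. ep i)"
    unfolding D_sum by (simp add: sum.union_disjoint)
  also have "(\<Sum>i\<in>{0..<s}. ep i) = A * card LP - A * card LM"
    unfolding L_split(1) using sum.union_disjoint[OF fin(1,2) L_split(2), of ep] sum_LP[OF order_refl] sum_LM[OF order_refl]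
    by simp
  also have "(\<Sum>i\<in>{s..<n}. ep i) = B * card SP - B * card SM"
    unfolding S_split(1) using sum.union_disjoint[OF fin(3,4) S_split(2), of ep] sum_SP[OF order_refl] sum_SM[OF order_refl]
    by simp
  finally show ?thesis by simp
qed


definition PI :: real where
  "PI = measure_pmf.prob (ia_step (makespan p) x) {zk. makespan p (fst zk) < makespan p x}"

lemma prob_ge:
  assumes "t \<le> n" "G \<subseteq> {Q. Q \<subseteq> {..<n} \<and> card Q = t \<and> \<bar>D - 2 * (\<Sum>i\<in>Q. ep i)\<bar> < D}"
  shows "PI \<ge> card G / (n choose t)"
proof -
  let ?H = "{Q. Q \<subseteq> {0..<n} \<and> card Q = t \<and> makespan p (flips x Q) < makespan p x}"
  have "G \<subseteq> ?H" using assms(2) improve_iff by (auto simp: atLeast0LessThan)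
  moreover have "finite ?H" by (rule finite_subset[of _ "Pow {0..<n}"]) auto
  ultimately have "card G \<le> card ?H" by (rule card_mono[rotated])
  then have "real (card G) / (n choose t) \<le> real (card ?H) / (card {0..<n} choose t)"
    by (simp add: divide_right_mono)
  also have "\<dots> \<le> PI"
    unfolding PI_def ia_step_prob using hyp_U[of "{0..<n}" t x "makespan p" x] assms(1) len by (simp add: lessThan_atLeast0)
  finally show ?thesis .
qed

lemma case1:
  assumes "D > B"
  shows "PI \<ge> card SP / n"
proof -
  have "PI \<ge> card ((\<lambda>i. {i}) ` SP) / (n choose 1)"
  proof (rule prob_ge)
    show "1 \<le> n" using s_lt_n by simp
    show "(\<lambda>i. {i}) ` SP \<subseteq> {Q. Q \<subseteq> {..<n} \<and> card Q = 1 \<and> \<bar>D - 2 * (\<Sum>i\<in>Q. ep i)\<bar> < D}"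
      using assms B_pos SP_ep by (auto simp: SP_def)
  qed
  moreover have "card ((\<lambda>i. {i}) ` SP) = card SP" by (rule card_image) (simp add: inj_on_def)
  ultimately show ?thesis by simp
qed


lemma case2:
  assumes LPs: "card LP = s"
    and h1: "real k * B < A" and h2: "real k * B > real m * B - (real s - 1) * A" and h3: "k \<le> m"
  shows "PI \<ge> real s * (m choose k) / (n choose Suc k)"
proof -
  define RR where "RR = {R. R \<subseteq> {s..<n} \<and> card R = k}"
  define G where "G = (\<lambda>(j, R). insert j R) ` ({0..<s} \<times> RR)"
  have LMe: "LM = {}" using card_L LPs fin(2) by simp
  have LPe: "LP = {0..<s}" using L_split(1) LMe by simp
  have cS: "card SP + card SM = m" by (rule card_S)
  have Dv: "D = A * s + B * card SP - B * card SM" using D_counts LMe LPs by simp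
  have inj: "inj_on (\<lambda>(j, R). insert j R) ({0..<s} \<times> RR)"
  proof (rule inj_onI)
    fix u v assume a0: "u \<in> {0..<s} \<times> RR" "v \<in> {0..<s} \<times> RR"
      "(\<lambda>(j, R). insert j R) u = (\<lambda>(j, R). insert j R) v"
    obtain j R where u: "u = (j, R)" by force
    obtain j' R' where v: "v = (j', R')" by force
    have a: "(j, R) \<in> {0..<s} \<times> RR" "(j', R') \<in> {0..<s} \<times> RR" "insert j R = insert j' R'"
      using a0 u v by auto
    then have "j \<notin> R" "j' \<notin> R'" "j \<notin> R'" "j' \<notin> R" by (auto simp: RR_def)
    then have "j = j' \<and> R = R'" using a(3) by (metis insert_eq_iff insert_iff)
    then show "u = v" using u v by simp
  qed
  have cardG: "card G = s * (m choose k)"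
  proof -
    have "card G = card ({0..<s} \<times> RR)" unfolding G_def using inj by (rule card_image)
    also have "\<dots> = s * card RR" by (simp add: card_cartesian_product)
    also have "card RR = m choose k" unfolding RR_def using n_subsets[of "{s..<n}" k] by (simp add: m_def)
    finally show ?thesis .
  qed
  have good: "G \<subseteq> {Q. Q \<subseteq> {..<n} \<and> card Q = Suc k \<and> \<bar>D - 2 * (\<Sum>i\<in>Q. ep i)\<bar> < D}"
  proof
    fix Q assume "Q \<in> G"
    then obtain j R where jR: "j < s" "R \<subseteq> {s..<n}" "card R = k" and Q: "Q = insert j R"
      unfolding G_def RR_def by auto
    have finR: "finite R" using jR(2) finite_subset by blast
    have jR': "j \<notin> R" using jR by auto
    have Qn: "Q \<subseteq> {..<n}" using Q jR s_lt_n by auto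
    have cQ: "card Q = Suc k" using Q finR jR' jR(3) by simp
    have ej: "ep j = A" using LP_ep LPe jR(1) by simp
    define a where "a = card (R \<inter> SP)"
    define b where "b = card (R \<inter> SM)"
    have Rsplit: "R = (R \<inter> SP) \<union> (R \<inter> SM)" using jR(2) S_split(1) by auto
    have dis: "(R \<inter> SP) \<inter> (R \<inter> SM) = {}" using S_split(2) by auto
    have ab: "a + b = k" unfolding a_def b_def using card_Un_disjoint[of "R \<inter> SP" "R \<inter> SM"] finR dis Rsplit jR(3)
      by (metis finite_Int)
    have aSP: "a \<le> card SP" unfolding a_def by (rule card_mono[OF fin(3)]) auto
    have sumR: "(\<Sum>i\<in>R. ep i) = B * a - B * b"
    proof -
      have "(\<Sum>i\<in>R. ep i) = (\<Sum>i\<in>R \<inter> SP. ep i) + (\<Sum>i\<in>R \<inter> SM. ep i)"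
        using sum.union_disjoint[of "R \<inter> SP" "R \<inter> SM" ep] finR dis Rsplit by (metis finite_Int)
      also have "\<dots> = B * a - B * b" unfolding a_def b_def
        using sum_SP[of "R \<inter> SP"] sum_SM[of "R \<inter> SM"] by simp
      finally show ?thesis .
    qed
    have sumQ: "(\<Sum>i\<in>Q. ep i) = A + B * a - B * b"
      using Q finR jR' ej sumR by simp
    have r1: "B * real a + B * real b = B * real k" using ab by (metis distrib_left of_nat_add)
    have r2: "B * real (card SP) + B * real (card SM) = B * real m" using cS by (metis distrib_left of_nat_add)
    have r3: "B * real a \<le> B * real (card SP)" using aSP B_pos by simp
    have r4: "B * real b \<ge> 0" "B * real a \<ge> 0" using B_pos by auto
    have "\<bar>D - 2 * (\<Sum>i\<in>Q. ep i)\<bar> < D"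
      unfolding sumQ Dv using r1 r2 r3 r4 h1 h2 by (simp add: abs_if algebra_simps)
    then show "Q \<in> {Q. Q \<subseteq> {..<n} \<and> card Q = Suc k \<and> \<bar>D - 2 * (\<Sum>i\<in>Q. ep i)\<bar> < D}"
      using Qn cQ by simp
  qed
  have "Suc k \<le> n" using h3 s_lt_n s_ge by (simp add: m_def)
  from prob_ge[OF this good] cardG show ?thesis by simp
qed


lemma central:
  obtains t G where "t \<le> n" "G \<noteq> {}"
    "G \<subseteq> {Q. Q \<subseteq> {..<n} \<and> card Q = t \<and> 2 * (\<Sum>i\<in>Q. ep i) = D}"
    "real (n choose t) \<le> 2 ^ s * (real t + 1) * card G"
proof -
  define xp where "xp = card LP div 2 + card LP mod 2"
  define xm where "xm = card LM div 2 + card LM mod 2"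
  define yp where "yp = card SP div 2 + card SP mod 2"
  define ym where "ym = card SM div 2 + card SM mod 2"
  have "xp \<le> card LP" unfolding xp_def by presburger
  then obtain XP where XP: "XP \<subseteq> LP" "card XP = xp" "finite XP"
    using obtain_subset_with_card_n by blast
  have "xm \<le> card LM" unfolding xm_def by presburger
  then obtain XM where XM: "XM \<subseteq> LM" "card XM = xm" "finite XM"
    using obtain_subset_with_card_n by blast
  define YY where "YY = {YP. YP \<subseteq> SP \<and> card YP = yp} \<times> {YM. YM \<subseteq> SM \<and> card YM = ym}"
  define G where "G = (\<lambda>(YP, YM). XP \<union> XM \<union> YP \<union> YM) ` YY"
  define t where "t = xp + xm + yp + ym"
  have LS: "LP \<inter> SP = {}" "LP \<inter> SM = {}" "LM \<inter> SP = {}" "LM \<inter> SM = {}" "LP \<inter> LM = {}" "SP \<inter> SM = {}"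
    by (auto simp: LP_def LM_def SP_def SM_def)
  have sub: "LP \<subseteq> {..<n}" "LM \<subseteq> {..<n}" "SP \<subseteq> {..<n}" "SM \<subseteq> {..<n}"
    using s_lt_n by (auto simp: LP_def LM_def SP_def SM_def)
  have par1: "2 * xp + card LM = 2 * xm + card LP"
    using card_L s_even unfolding xp_def xm_def by presburger
  have "even m" unfolding m_def using n_even s_even s_lt_n by simp
  then have ev: "even (card SP + card SM)" using card_S by simp
  have par2: "2 * yp + card SM = 2 * ym + card SP"
    using par_aux[OF ev] unfolding yp_def ym_def .
  have inj: "inj_on (\<lambda>(YP, YM). XP \<union> XM \<union> YP \<union> YM) YY"
  proof (rule inj_onI)
    fix u v assume a0: "u \<in> YY" "v \<in> YY" "(\<lambda>(YP, YM). XP \<union> XM \<union> YP \<union> YM) u = (\<lambda>(YP, YM). XP \<union> XM \<union> YP \<union> YM) v"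
    obtain P1 M1 where u: "u = (P1, M1)" by force
    obtain P2 M2 where v: "v = (P2, M2)" by force
    have h: "P1 \<subseteq> SP" "M1 \<subseteq> SM" "P2 \<subseteq> SP" "M2 \<subseteq> SM" using a0 u v by (auto simp: YY_def)
    have e: "XP \<union> XM \<union> P1 \<union> M1 = XP \<union> XM \<union> P2 \<union> M2" using a0 u v by simp
    have "P1 = (XP \<union> XM \<union> P1 \<union> M1) \<inter> SP" using h XP XM LS by blast
    moreover have "P2 = (XP \<union> XM \<union> P2 \<union> M2) \<inter> SP" using h XP XM LS by blast
    moreover have "M1 = (XP \<union> XM \<union> P1 \<union> M1) \<inter> SM" using h XP XM LS by blast
    moreover have "M2 = (XP \<union> XM \<union> P2 \<union> M2) \<inter> SM" using h XP XM LS by blast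
    ultimately show "u = v" using u v e by simp
  qed
  have cardG: "card G = (card SP choose yp) * (card SM choose ym)"
  proof -
    have "card G = card YY" unfolding G_def by (rule card_image[OF inj])
    also have "\<dots> = (card SP choose yp) * (card SM choose ym)"
      unfolding YY_def card_cartesian_product using n_subsets[OF fin(3), of yp] n_subsets[OF fin(4), of ym] by simp
    finally show ?thesis .
  qed
  have cardG': "card G = (card SP choose (card SP div 2)) * (card SM choose (card SM div 2))"
    unfolding cardG yp_def ym_def choose_half_mod ..
  have Gne: "G \<noteq> {}"
  proof -
    have "card G > 0" unfolding cardG' by simp
    then show ?thesis by auto
  qed
  have good: "G \<subseteq> {Q. Q \<subseteq> {..<n} \<and> card Q = t \<and> 2 * (\<Sum>i\<in>Q. ep i) = D}"
  proof
    fix Q assume "Q \<in> G"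
    then obtain YP YM where Y: "YP \<subseteq> SP" "card YP = yp" "YM \<subseteq> SM" "card YM = ym"
      and Q: "Q = XP \<union> XM \<union> YP \<union> YM" unfolding G_def YY_def by auto
    have finY: "finite YP" "finite YM" using Y fin finite_subset by blast+
    have d1: "XP \<inter> XM = {}" using XP XM LS by blast
    have d2: "(XP \<union> XM) \<inter> YP = {}" using XP XM Y LS by blast
    have d3: "(XP \<union> XM \<union> YP) \<inter> YM = {}" using XP XM Y LS by blast
    have cQ: "card Q = t" unfolding Q t_def
      using card_Un_disjoint[OF _ _ d3] card_Un_disjoint[OF _ _ d2] card_Un_disjoint[OF _ _ d1] XP XM Y finY
      by simp
    have sQ: "(\<Sum>i\<in>Q. ep i) = A * xp - A * xm + B * yp - B * ym"
    proof -
      have "(\<Sum>i\<in>Q. ep i) = (\<Sum>i\<in>XP. ep i) + (\<Sum>i\<in>XM. ep i) + (\<Sum>i\<in>YP. ep i) + (\<Sum>i\<in>YM. ep i)"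
        unfolding Q using sum.union_disjoint[OF _ _ d3, of ep] sum.union_disjoint[OF _ _ d2, of ep] sum.union_disjoint[OF _ _ d1, of ep] XP XM finY
        by simp
      also have "\<dots> = A * xp - A * xm + B * yp - B * ym"
        using sum_LP[OF XP(1)] sum_LM[OF XM(1)] sum_SP[OF Y(1)] sum_SM[OF Y(3)] XP XM Y by simp
      finally show ?thesis .
    qed
    have p1: "2 * real xp + card LM = 2 * real xm + card LP" using par1 by (metis of_nat_add of_nat_mult of_nat_numeral)
    have p2: "2 * real yp + card SM = 2 * real ym + card SP" using par2 by (metis of_nat_add of_nat_mult of_nat_numeral)
    have "2 * (\<Sum>i\<in>Q. ep i) = D"
    proof -
      have "2 * (\<Sum>i\<in>Q. ep i) = A * (2 * real xp - 2 * real xm) + B * (2 * real yp - 2 * real ym)"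
        unfolding sQ by (simp add: algebra_simps)
      also have "\<dots> = A * (real (card LP) - real (card LM)) + B * (real (card SP) - real (card SM))"
        using p1 p2 by (smt (verit))
      also have "\<dots> = D" using D_counts by (simp add: algebra_simps)
      finally show ?thesis .
    qed
    moreover have "Q \<subseteq> {..<n}" unfolding Q using XP XM Y sub by blast
    ultimately show "Q \<in> {Q. Q \<subseteq> {..<n} \<and> card Q = t \<and> 2 * (\<Sum>i\<in>Q. ep i) = D}" using cQ by simp
  qed
  have tn: "t \<le> n"
  proof -
    obtain Q where "Q \<in> G" using Gne by auto
    with good have "Q \<subseteq> {..<n}" "card Q = t" by auto
    then show ?thesis by (metis card_lessThan card_mono finite_lessThan)
  qed
  have "n choose t \<le> 2 ^ s * ((t + 1) * card G)"
  proof -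
    have "n = s + (card SP + card SM)" using card_S s_lt_n by (simp add: m_def)
    then show ?thesis unfolding cardG' using bin_total_bound[of s "card SP" "card SM" t] by simp
  qed
  then have "real (n choose t) \<le> real (2 ^ s * ((t + 1) * card G))" by (simp only: of_nat_le_iff)
  then have "real (n choose t) \<le> 2 ^ s * (real t + 1) * card G" by (simp add: algebra_simps)
  then show ?thesis using that tn Gne good by blast
qed

lemma case3: "PI \<ge> 1 / (2 ^ s * (real n + 1))"
proof -
  obtain t G where tG: "t \<le> n" "G \<noteq> {}"
    "G \<subseteq> {Q. Q \<subseteq> {..<n} \<and> card Q = t \<and> 2 * (\<Sum>i\<in>Q. ep i) = D}"
    "real (n choose t) \<le> 2 ^ s * (real t + 1) * card G"
    by (rule central)
  have "G \<subseteq> {Q. Q \<subseteq> {..<n} \<and> card Q = t \<and> \<bar>D - 2 * (\<Sum>i\<in>Q. ep i)\<bar> < D}"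
    using tG(3) D_pos by auto
  from prob_ge[OF tG(1) this] have P: "PI \<ge> card G / (n choose t)" .
  have cG: "real (card G) > 0"
  proof -
    have "finite G" using tG(3) by (rule finite_subset) (rule finite_subset[of _ "Pow {..<n}"], auto)
    then show ?thesis using tG(2) by (simp add: card_gt_0_iff)
  qed
  have Cpos: "real (n choose t) > 0" using tG(1) by simp
  have "1 / (2 ^ s * (real n + 1)) \<le> 1 / (2 ^ s * (real t + 1))"
    using tG(1) by (intro divide_left_mono mult_left_mono) auto
  also have "\<dots> = card G / (2 ^ s * (real t + 1) * card G)" using cG by simp
  also have "\<dots> \<le> card G / (n choose t)"
    using tG(4) Cpos cG by (intro divide_left_mono) auto
  finally show ?thesis using P by linarith
qed

end



lemma card_le2:
  assumes "finite K" "\<forall>a\<in>K. \<forall>b\<in>K. a \<le> b + (1::nat)"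
  shows "card K \<le> 2"
proof (cases "K = {}")
  case False
  define a0 where "a0 = Min K"
  have "K \<subseteq> {a0, a0 + 1}"
  proof
    fix b assume b: "b \<in> K"
    have "a0 \<le> b" unfolding a0_def using assms(1) b by simp
    moreover have "a0 \<in> K" unfolding a0_def using assms(1) False by simp
    then have "b \<le> a0 + 1" using assms(2) b by auto
    ultimately show "b \<in> {a0, a0 + 1}" by auto
  qed
  then have "card K \<le> card {a0, a0 + 1}" by (intro card_mono) auto
  then show ?thesis by simp
qed simp

lemma sum_if_count:
  assumes "finite I"
  shows "(\<Sum>i\<in>I. if z ! i then - c else c) = c * (2 * real (card {i\<in>I. \<not> z ! i}) - real (card I))"
proof -
  have I: "I = {i\<in>I. z ! i} \<union> {i\<in>I. \<not> z ! i}" "{i\<in>I. z ! i} \<inter> {i\<in>I. \<not> z ! i} = {}" by auto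
  have c: "card I = card {i\<in>I. z ! i} + card {i\<in>I. \<not> z ! i}"
    using card_Un_disjoint[of "{i\<in>I. z ! i}" "{i\<in>I. \<not> z ! i}"] assms I by auto
  have "(\<Sum>i\<in>I. if z ! i then - c else c) = (\<Sum>i\<in>{i\<in>I. z ! i}. - c) + (\<Sum>i\<in>{i\<in>I. \<not> z ! i}. c)"
    using sum.union_disjoint[of "{i\<in>I. z ! i}" "{i\<in>I. \<not> z ! i}" "\<lambda>i. if z ! i then - c else c"] assms I
    by (auto intro: sum.cong)
  also have "\<dots> = c * (2 * real (card {i\<in>I. \<not> z ! i}) - real (card I))"
    using c by (simp add: algebra_simps)
  finally show ?thesis .
qed

context inst
begin

definition cl :: "bool list \<Rightarrow> nat" where "cl z = card {i\<in>{0..<s}. \<not> z ! i}"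
definition cs :: "bool list \<Rightarrow> nat" where "cs z = card {i\<in>{s..<n}. \<not> z ! i}"
definition hh :: "nat \<Rightarrow> nat \<Rightarrow> real" where "hh l q = A * (2 * real l - real s) + B * (2 * real q - real m)"

lemma cl_le: "cl z \<le> s"
proof -
  have "cl z \<le> card {0..<s}" unfolding cl_def by (rule card_mono) auto
  then show ?thesis by simp
qed
lemma cs_le: "cs z \<le> m"
proof -
  have "cs z \<le> card {s..<n}" unfolding cs_def by (rule card_mono) auto
  then show ?thesis by (simp add: m_def)
qed

lemma sig_counts:
  assumes "length z = n"
  shows "sig z = hh (cl z) (cs z)"
proof -
  have "{..<n} = {0..<s} \<union> {s..<n}" using s_lt_n by auto
  then have "sig z = (\<Sum>i\<in>{0..<s}. e z i) + (\<Sum>i\<in>{s..<n}. e z i)"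
    unfolding sig_def by (simp add: sum.union_disjoint)
  also have "(\<Sum>i\<in>{0..<s}. e z i) = (\<Sum>i\<in>{0..<s}. if z ! i then - A else A)"
    by (rule sum.cong) (auto simp: e_def p_eq)
  also have "\<dots> = A * (2 * real (cl z) - real s)" unfolding cl_def by (subst sum_if_count) auto
  also have "(\<Sum>i\<in>{s..<n}. e z i) = (\<Sum>i\<in>{s..<n}. if z ! i then - B else B)"
    by (rule sum.cong) (auto simp: e_def p_eq)
  also have "\<dots> = B * (2 * real (cs z) - real m)" unfolding cs_def m_def by (subst sum_if_count) auto
  finally show ?thesis unfolding hh_def .
qed

lemma card_K: "card {q\<in>{..m}. \<bar>hh l q\<bar> \<le> B} \<le> 2"
proof (rule card_le2)
  show "\<forall>a\<in>{q \<in> {..m}. \<bar>hh l q\<bar> \<le> B}. \<forall>b\<in>{q \<in> {..m}. \<bar>hh l q\<bar> \<le> B}. a \<le> b + 1"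
  proof (intro ballI, rule ccontr)
    fix a b assume a: "a \<in> {q \<in> {..m}. \<bar>hh l q\<bar> \<le> B}" and b: "b \<in> {q \<in> {..m}. \<bar>hh l q\<bar> \<le> B}"
      and nab: "\<not> a \<le> b + 1"
    then have "real a \<ge> real b + 2" by simp
    then have "B * real a \<ge> B * real b + 2 * B" using B_pos
      by (metis distrib_left mult.commute mult_left_mono less_eq_real_def of_nat_add)
    moreover have "hh l a - hh l b = 2 * (B * real a) - 2 * (B * real b)" unfolding hh_def by (simp add: algebra_simps)
    ultimately show False using a b B_pos by auto
  qed
qed auto

lemma card_P: "card {(l, q). l \<le> s \<and> q \<le> m \<and> \<bar>hh l q\<bar> \<le> B} \<le> 2 * (s + 1)"
proof -
  have "{(l, q). l \<le> s \<and> q \<le> m \<and> \<bar>hh l q\<bar> \<le> B} \<subseteq> (\<Union>l\<in>{..s}. {l} \<times> {q\<in>{..m}. \<bar>hh l q\<bar> \<le> B})"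
    by auto
  then have "card {(l, q). l \<le> s \<and> q \<le> m \<and> \<bar>hh l q\<bar> \<le> B} \<le> card (\<Union>l\<in>{..s}. {l} \<times> {q\<in>{..m}. \<bar>hh l q\<bar> \<le> B})"
    by (intro card_mono) auto
  also have "\<dots> \<le> (\<Sum>l\<in>{..s}. card ({l} \<times> {q\<in>{..m}. \<bar>hh l q\<bar> \<le> B}))" by (rule card_UN_le) simp
  also have "\<dots> \<le> (\<Sum>l\<in>{..s}. 2)" using card_K by (intro sum_mono) (simp add: card_cartesian_product)
  also have "\<dots> = 2 * (s + 1)" by simp
  finally show ?thesis .
qed

end

lemma binom_le_pred: "((m::nat) - 1) choose k \<le> m choose k"
proof (cases m)
  case (Suc m') then show ?thesis by (cases k) auto
qed simp

lemma binom_Suc_bound: "Suc k * (m choose Suc k) \<le> m * (m choose k)"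
proof (cases m)
  case 0 then show ?thesis by simp
next
  case (Suc m')
  have "Suc k * (m choose Suc k) = m * (m' choose k)" using Suc_times_binomial[of k m'] Suc by simp
  also have "\<dots> \<le> m * (m choose k)" using binom_le_pred[of m k] Suc by (intro mult_left_mono) auto
  finally show ?thesis .
qed

locale inst2 = inst +
  fixes p0 :: real and k :: nat
  assumes cA: "(real s - 1) * A < real m * B"
    and h1: "real k * B < A" and h2: "real k * B > real m * B - (real s - 1) * A"
    and h3: "2 * k \<le> m" and h4: "Suc k \<le> m"
    and p0_pos: "p0 > 0" and p0_1: "p0 \<le> A / (2 * B * n)"
    and p0_2: "p0 \<le> real s * real (Suc k) / (2 ^ s * real m)"
begin

lemma binom_ratio: "real s * (m choose k) / (n choose Suc k) \<ge> p0"
proof -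
  have nsm: "n = s + m" using s_lt_n by (simp add: m_def)
  have bnd: "real (m choose (Suc k - j)) \<le> real (m choose k) * m / Suc k" if "j \<le> Suc k" for j
  proof (cases j)
    case 0
    have "real (Suc k) * real (m choose Suc k) \<le> real m * real (m choose k)"
      using binom_Suc_bound[of k m] by (metis of_nat_le_iff of_nat_mult)
    then show ?thesis using 0 by (simp add: field_simps)
  next
    case (Suc j')
    have "m choose (Suc k - j) \<le> m choose k" using h3 Suc that by (intro binomial_mono) auto
    moreover have "real (m choose k) \<le> real (m choose k) * m / Suc k"
    proof -
      have "real (m choose k) * real (Suc k) \<le> real (m choose k) * real m"
        using h4 by (intro mult_left_mono) auto
      then show ?thesis by (simp add: field_simps)
    qed
    ultimately show ?thesis by (meson le_trans of_nat_le_iff order_trans)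
  qed
  have "real (n choose Suc k) = (\<Sum>j\<le>Suc k. real (s choose j) * real (m choose (Suc k - j)))"
  proof -
    have "n choose Suc k = (s + m) choose Suc k" by (rule arg_cong[where f="\<lambda>a. a choose Suc k", OF nsm])
    also have "\<dots> = (\<Sum>j\<le>Suc k. (s choose j) * (m choose (Suc k - j)))" by (rule vandermonde[symmetric])
    finally show ?thesis by (metis (no_types, lifting) of_nat_mult of_nat_sum sum.cong)
  qed
  also have "\<dots> \<le> (\<Sum>j\<le>Suc k. real (s choose j) * (real (m choose k) * m / Suc k))"
    using bnd by (intro sum_mono mult_left_mono) auto
  also have "\<dots> = real (\<Sum>j\<le>Suc k. s choose j) * (real (m choose k) * m / Suc k)"
    by (simp only: sum_distrib_right of_nat_sum)
  also have "\<dots> \<le> 2 ^ s * (real (m choose k) * m / Suc k)"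
  proof (rule mult_right_mono)
    show "real (\<Sum>j\<le>Suc k. s choose j) \<le> 2 ^ s"
    proof -
      have "real (\<Sum>j\<le>Suc k. s choose j) \<le> real ((2::nat) ^ s)"
        using sum_choose_le[where t="Suc k" and s=s] by (simp only: of_nat_le_iff)
      then show ?thesis by simp
    qed
  qed simp
  finally have C: "real (n choose Suc k) \<le> 2 ^ s * (real (m choose k) * m / Suc k)" .
  have pos: "real (m choose k) > 0" "real (n choose Suc k) > 0" "real m > 0"
    using h4 s_lt_n by (auto simp: m_def)
  have "p0 \<le> real s * real (Suc k) / (2 ^ s * real m)" by (rule p0_2)
  also have "\<dots> = real s * (m choose k) / (2 ^ s * (real (m choose k) * m / Suc k))"
    using pos by (simp add: field_simps)
  also have "\<dots> \<le> real s * (m choose k) / (n choose Suc k)"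
    using C pos by (intro divide_left_mono) auto
  finally show ?thesis .
qed


lemma PI_bounds:
  assumes xl: "length x = n" and nz: "sig x \<noteq> 0"
  shows "measure_pmf.prob (ia_step (makespan p) x) {zk. makespan p (fst zk) < makespan p x} \<ge> 1 / (2 ^ s * (real n + 1))"
    and "\<bar>sig x\<bar> > B \<Longrightarrow> measure_pmf.prob (ia_step (makespan p) x) {zk. makespan p (fst zk) < makespan p x} \<ge> p0"
proof -
  interpret X: inst_x s n A B p x by unfold_locales (use xl nz in auto)
  show "measure_pmf.prob (ia_step (makespan p) x) {zk. makespan p (fst zk) < makespan p x} \<ge> 1 / (2 ^ s * (real n + 1))"
    using X.case3 unfolding X.PI_def .
  assume DB: "\<bar>sig x\<bar> > B"
  have DB': "X.D > B" using DB X.D_def by simp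
  have "X.PI \<ge> p0"
  proof (cases "card X.LP = s")
    case True
    have "X.PI \<ge> real s * (m choose k) / (n choose Suc k)"
      using X.case2[OF True h1 h2] h4 by simp
    then show ?thesis using binom_ratio by linarith
  next
    case False
    then have lt: "card X.LP \<le> s - 1" using X.card_L by simp
    have P1: "X.PI \<ge> card X.SP / n" using X.case1[OF DB'] .
    have e1: "A * card X.LP + A * card X.LM = A * s" using X.card_L by (metis distrib_left of_nat_add)
    have e2: "B * card X.SP + B * card X.SM = B * m" using X.card_S by (metis distrib_left of_nat_add)
    have i1: "A * card X.LP + A \<le> A * real s"
    proof -
      have "real (card X.LP) \<le> real s - 1" using lt s_ge by linarith
      then have "A * card X.LP \<le> A * (real s - 1)" using A_pos by (intro mult_left_mono) auto
      then show ?thesis by (simp add: algebra_simps)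
    qed
    have cA': "A * real s - A < B * real m" using cA by (simp add: algebra_simps)
    have "2 * (B * card X.SP) > A"
      using X.D_counts DB' e1 e2 i1 cA' B_pos by linarith
    then have "real (card X.SP) \<ge> A / (2 * B)" using B_pos by (simp add: field_simps)
    then have "real (card X.SP) / n \<ge> A / (2 * B) / n" using s_lt_n by (intro divide_right_mono) auto
    then have "real (card X.SP) / n \<ge> p0" using p0_1 by (simp add: mult.commute mult.left_commute)
    then show ?thesis using P1 by linarith
  qed
  then show "measure_pmf.prob (ia_step (makespan p) x) {zk. makespan p (fst zk) < makespan p x} \<ge> p0"
    unfolding X.PI_def .
qed


lemma tot_pos: "tot > 0"
  unfolding tot_def using s_lt_n p_pos by (intro sum_pos) auto

lemma finV: "finite (makespan p ` {z. length z = n})"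
  using finite_lists_length_eq[of "UNIV :: bool set" n] by simp

lemma opt_val: "opt_value (makespan p) n = tot / 2"
proof -
  define x0 where "x0 = replicate n False"
  have l0: "length x0 = n" unfolding x0_def by simp
  have s0: "sig x0 = tot" unfolding sig_def tot_def x0_def e_def by simp
  interpret X: inst_x s n A B p x0 by unfold_locales (use l0 s0 tot_pos in auto)
  obtain t G where tG: "t \<le> n" "G \<noteq> {}"
    "G \<subseteq> {Q. Q \<subseteq> {..<n} \<and> card Q = t \<and> 2 * (\<Sum>i\<in>Q. X.ep i) = X.D}"
    "real (n choose t) \<le> 2 ^ s * (real t + 1) * card G"
    by (rule X.central)
  then obtain Q where Q: "Q \<subseteq> {..<n}" "2 * (\<Sum>i\<in>Q. X.ep i) = X.D" by blast
  have "sig (flips x0 Q) = 0" using X.sig_flips_ep[OF Q(1)] Q(2) by simp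
  then have m0: "makespan p (flips x0 Q) = tot / 2" using makespan_eq[of "flips x0 Q"] l0 by simp
  show ?thesis unfolding opt_value_def
  proof (rule Min_eqI[OF finV])
    fix y assume "y \<in> makespan p ` {z. length z = n}"
    then obtain z where "length z = n" "y = makespan p z" by auto
    then show "tot / 2 \<le> y" using makespan_eq[of z] by simp
  next
    show "tot / 2 \<in> makespan p ` {z. length z = n}" using m0 l0 by (metis (mono_tags) image_eqI length_flips mem_Collect_eq)
  qed
qed

definition K2 :: real where "K2 = real n * (2 ^ s * (real n + 1))"
definition wt :: "real \<Rightarrow> real" where "wt v = (if 2 * v - tot \<le> B then K2 else real n / p0)"

lemma rem_bound:
  assumes xl: "length x = n"
  shows "remaining_evals (makespan p) n x \<le> ennreal (real ((s + 1) * (m + 1)) * (real n / p0) + real (2 * (s + 1)) * K2)"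
proof -
  let ?f = "makespan p"
  let ?V = "?f ` {z. length z = n}"
  have wnn: "wt v \<ge> 0" for v unfolding wt_def K2_def using p0_pos by auto
  have key: "real n \<le> wt (?f y) * measure_pmf.prob (ia_step ?f y) {zk. ?f (fst zk) < ?f y}"
    if yl: "length y = n" and ny: "?f y \<noteq> opt_value ?f n" for y
  proof -
    have my: "?f y = (tot + \<bar>sig y\<bar>) / 2" using makespan_eq[OF yl] .
    have nz: "sig y \<noteq> 0" using ny my opt_val by auto
    have my2: "2 * ?f y - tot = \<bar>sig y\<bar>" using my by simp
    let ?P = "measure_pmf.prob (ia_step ?f y) {zk. ?f (fst zk) < ?f y}"
    show ?thesis
    proof (cases "\<bar>sig y\<bar> \<le> B")
      case True
      then have w: "wt (?f y) = K2" unfolding wt_def my2 by simp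
      have "?P \<ge> 1 / (2 ^ s * (real n + 1))" using PI_bounds(1)[OF yl nz] .
      then have "K2 * ?P \<ge> K2 * (1 / (2 ^ s * (real n + 1)))" unfolding K2_def by (intro mult_left_mono) auto
      moreover have "K2 * (1 / (2 ^ s * (real n + 1))) = real n" unfolding K2_def by (simp add: add_pos_pos)
      ultimately show ?thesis using w by simp
    next
      case False
      then have w: "wt (?f y) = real n / p0" unfolding wt_def my2 by simp
      have "?P \<ge> p0" using PI_bounds(2)[OF yl nz] False by simp
      then have "real n / p0 * ?P \<ge> real n / p0 * p0" by (intro mult_left_mono) (use p0_pos in auto)
      then show ?thesis using w p0_pos by simp
    qed
  qed
  have R: "remaining_evals ?f n x \<le> ennreal (\<Sum>v\<in>{v\<in>?V. opt_value ?f n < v \<and> v \<le> ?f x}. wt v)"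
    by (rule remaining_evals_bound[OF wnn key xl]) auto
  define Vs where "Vs = {v\<in>?V. tot / 2 < v \<and> 2 * v - tot \<le> B}"
  have cV: "card ?V \<le> (s + 1) * (m + 1)"
  proof -
    have "?V \<subseteq> (\<lambda>(l, q). (tot + \<bar>hh l q\<bar>) / 2) ` ({..s} \<times> {..m})"
    proof
      fix v assume "v \<in> ?V"
      then obtain z where z: "length z = n" "v = ?f z" by auto
      then have "v = (tot + \<bar>hh (cl z) (cs z)\<bar>) / 2" using makespan_eq sig_counts by simp
      then show "v \<in> (\<lambda>(l, q). (tot + \<bar>hh l q\<bar>) / 2) ` ({..s} \<times> {..m})"
        using cl_le cs_le by force
    qed
    then have "card ?V \<le> card ((\<lambda>(l, q). (tot + \<bar>hh l q\<bar>) / 2) ` ({..s} \<times> {..m}))"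
      by (intro card_mono) auto
    also have "\<dots> \<le> card ({..s} \<times> {..m})" by (rule card_image_le) auto
    finally show ?thesis by (simp add: card_cartesian_product)
  qed
  have cVs: "card Vs \<le> 2 * (s + 1)"
  proof -
    have "Vs \<subseteq> (\<lambda>(l, q). (tot + \<bar>hh l q\<bar>) / 2) ` {(l, q). l \<le> s \<and> q \<le> m \<and> \<bar>hh l q\<bar> \<le> B}"
    proof
      fix v assume "v \<in> Vs"
      then obtain z where z: "length z = n" "v = ?f z" and vB: "2 * v - tot \<le> B" unfolding Vs_def by auto
      then have "v = (tot + \<bar>hh (cl z) (cs z)\<bar>) / 2" using makespan_eq sig_counts by simp
      moreover have "2 * v = tot + \<bar>hh (cl z) (cs z)\<bar>" using calculation by simp
      then have "\<bar>hh (cl z) (cs z)\<bar> \<le> B" using vB by linarith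
      ultimately show "v \<in> (\<lambda>(l, q). (tot + \<bar>hh l q\<bar>) / 2) ` {(l, q). l \<le> s \<and> q \<le> m \<and> \<bar>hh l q\<bar> \<le> B}"
        using cl_le cs_le by force
    qed
    then have "card Vs \<le> card ((\<lambda>(l, q). (tot + \<bar>hh l q\<bar>) / 2) ` {(l, q). l \<le> s \<and> q \<le> m \<and> \<bar>hh l q\<bar> \<le> B})"
    proof (rule card_mono[rotated])
      have "{(l, q). l \<le> s \<and> q \<le> m \<and> \<bar>hh l q\<bar> \<le> B} \<subseteq> {..s} \<times> {..m}" by auto
      then show "finite ((\<lambda>(l, q). (tot + \<bar>hh l q\<bar>) / 2) ` {(l, q). l \<le> s \<and> q \<le> m \<and> \<bar>hh l q\<bar> \<le> B})"
        by (meson finite_SigmaI finite_atMost finite_imageI finite_subset)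
    qed
    also have "\<dots> \<le> card {(l, q). l \<le> s \<and> q \<le> m \<and> \<bar>hh l q\<bar> \<le> B}" by (rule card_image_le)
      (rule finite_subset[of _ "{..s} \<times> {..m}"], auto)
    also have "\<dots> \<le> 2 * (s + 1)" by (rule card_P)
    finally show ?thesis .
  qed
  have "(\<Sum>v\<in>{v\<in>?V. opt_value ?f n < v \<and> v \<le> ?f x}. wt v)
      \<le> (\<Sum>v\<in>{v\<in>?V. opt_value ?f n < v \<and> v \<le> ?f x}. real n / p0 + (if v \<in> Vs then K2 else 0))"
  proof (rule sum_mono)
    fix v assume v: "v \<in> {v\<in>?V. opt_value ?f n < v \<and> v \<le> ?f x}"
    show "wt v \<le> real n / p0 + (if v \<in> Vs then K2 else 0)"
    proof (cases "2 * v - tot \<le> B")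
      case True
      then have "v \<in> Vs" using v opt_val unfolding Vs_def by auto
      then show ?thesis using True p0_pos unfolding wt_def by simp
    next
      case False then show ?thesis unfolding wt_def K2_def by simp
    qed
  qed
  also have "\<dots> \<le> (\<Sum>v\<in>?V. real n / p0 + (if v \<in> Vs then K2 else 0))"
    using finV p0_pos unfolding K2_def by (intro sum_mono2) auto
  also have "\<dots> = card ?V * (real n / p0) + card Vs * K2"
    using finV unfolding Vs_def by (simp add: sum.distrib sum.If_cases Int_def)
  also have "\<dots> \<le> real ((s + 1) * (m + 1)) * (real n / p0) + real (2 * (s + 1)) * K2"
  proof (rule add_mono)
    show "real (card ?V) * (real n / p0) \<le> real ((s + 1) * (m + 1)) * (real n / p0)"
    proof (rule mult_right_mono)
      show "real (card ?V) \<le> real ((s + 1) * (m + 1))" using cV by (simp only: of_nat_le_iff)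
    qed (use p0_pos in auto)
    show "real (card Vs) * K2 \<le> real (2 * (s + 1)) * K2"
    proof (rule mult_right_mono)
      show "real (card Vs) \<le> real (2 * (s + 1))" using cVs by (simp only: of_nat_le_iff)
    qed (auto simp: K2_def)
  qed
  finally show ?thesis using R by (meson ennreal_leI order_trans)
qed


lemma exp_bound:
  "expected_runtime p n \<le> ennreal (1 + (real ((s + 1) * (m + 1)) * (real n / p0) + real (2 * (s + 1)) * K2))"
proof -
  define c where "c = real ((s + 1) * (m + 1)) * (real n / p0) + real (2 * (s + 1)) * K2"
  have c0: "c \<ge> 0" unfolding c_def K2_def using p0_pos by auto
  have fin: "finite {x :: bool list. length x = n}" using finite_lists_length_eq[of "UNIV :: bool set" n] by simp
  have ne: "{x :: bool list. length x = n} \<noteq> {}" by (auto intro: exI[of _ "replicate n False"])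
  have "(\<integral>\<^sup>+ x. remaining_evals (makespan p) n x \<partial>measure_pmf (pmf_of_set {x. length x = n}))
      \<le> (\<integral>\<^sup>+ x. ennreal c \<partial>measure_pmf (pmf_of_set {x :: bool list. length x = n}))"
  proof (rule nn_integral_mono_AE)
    show "AE x in measure_pmf (pmf_of_set {x. length x = n}). remaining_evals (makespan p) n x \<le> ennreal c"
      unfolding AE_measure_pmf_iff set_pmf_of_set[OF ne fin] using rem_bound unfolding c_def by simp
  qed
  also have "\<dots> = ennreal c" by (simp add: measure_pmf.emeasure_space_1)
  finally have "expected_runtime p n \<le> 1 + ennreal c" unfolding expected_runtime_def by (intro add_left_mono)
  also have "\<dots> = ennreal (1 + c)" using c0 by (simp add: ennreal_plus)
  finally show ?thesis unfolding c_def .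
qed

end


lemma real_facts:
  fixes S eps :: real
  assumes S2: "S \<ge> 2" and e0: "0 < eps" and e1: "eps < 1 / (2 * S - 1)"
  defines "A \<equiv> 1 / (2 * S - 1) - eps / (2 * S)"
  defines "c \<equiv> (S - 1) / (2 * S - 1) + eps / 2"
  shows "A > 0" "c > 0" "(S - 1) * A < c" "c < S * A" "c < 2 * (S - 1) * A"
proof -
  define u where "u = 1 / (2 * S - 1)"
  have u0: "u > 0" unfolding u_def using S2 by simp
  have eu: "eps < u" using e1 u_def by simp
  have Au: "A = u - eps / (2 * S)" unfolding A_def u_def ..
  have cu: "c = (S - 1) * u + eps / 2" unfolding c_def u_def by simp
  have "eps / (2 * S) < eps" using e0 S2 by (simp add: field_simps)
  then show A0: "A > 0" using Au eu by linarith
  show "c > 0" using cu u0 e0 S2 by (simp add: add_pos_pos)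
  have "c - (S - 1) * A = eps / 2 + (S - 1) * (eps / (2 * S))" unfolding cu Au by (simp add: algebra_simps)
  moreover have "(S - 1) * (eps / (2 * S)) \<ge> 0" using S2 e0 by simp
  ultimately show "(S - 1) * A < c" using e0 by linarith
  have "S * A - c = u - eps" unfolding cu Au using S2 by (simp add: field_simps)
  then show "c < S * A" using eu by linarith
  define K where "K = (S - 1) / S + 1 / 2"
  have K0: "K > 0" unfolding K_def using S2 by (simp add: add_pos_nonneg)
  have "2 * (S - 1) * A - c = (S - 1) * u - eps * K"
    unfolding cu Au K_def using S2 by (simp add: field_simps)
  moreover have "eps * K < u * K" using eu K0 by simp
  moreover have "S - 1 - K \<ge> 0"
  proof -
    have "S - 1 - K = (S - 2) * (S - 1 / 2) / S" unfolding K_def using S2 by (simp add: field_simps)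
    also have "\<dots> \<ge> 0" using S2 by simp
    finally show ?thesis .
  qed
  then have "u * (S - 1 - K) \<ge> 0" using u0 by simp
  then have "(S - 1) * u \<ge> u * K" by (simp add: algebra_simps)
  ultimately show "c < 2 * (S - 1) * A" by linarith
qed


theorem theorem4:
  fixes s :: nat and eps :: real
  assumes "even s" and "s \<ge> 2"
    and "0 < eps" and "eps < 1 / (2 * real s - 1)"
  shows "\<exists>C N. \<forall>n \<ge> N. even n \<longrightarrow>
           expected_runtime (G_star s eps n) n \<le> ennreal (C * real n ^ 2)"
proof -
  define S where "S = real s"
  have S2: "S \<ge> 2" using assms(2) unfolding S_def by simp
  define A where "A = 1 / (2 * S - 1) - eps / (2 * S)"
  define c where "c = (S - 1) / (2 * S - 1) + eps / 2"
  have RF: "A > 0" "c > 0" "(S - 1) * A < c" "c < S * A" "c < 2 * (S - 1) * A"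
    using real_facts[OF S2 assms(3)] assms(4) unfolding A_def c_def S_def by auto
  define rho where "rho = (c - (S - 1) * A) / c"
  define al where "al = A / c"
  define xi where "xi = (rho + min al (1 / 2)) / 2"
  have c0: "c > 0" using RF(2) .
  have rho0: "rho > 0" unfolding rho_def using RF(3) c0 by (intro divide_pos_pos) auto
  have rho_al: "rho < al" unfolding rho_def al_def using RF by (simp add: divide_strict_right_mono algebra_simps)
  have rho_h: "rho < 1 / 2" unfolding rho_def using RF by (simp add: field_simps)
  have xi1: "rho < xi" "xi < al" "xi \<le> 1 / 2" unfolding xi_def using rho_al rho_h by auto
  define p0 where "p0 = min (A / (4 * c)) (S * xi / 2 ^ s)"
  have p0_pos: "p0 > 0" unfolding p0_def using RF(1) c0 xi1 rho0 S2 by auto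
  define N where "N = 2 * s + 2 + nat \<lceil>1 / (xi - rho)\<rceil>"
  define C where "C = 1 + (S + 1) / p0 + 4 * (S + 1) * 2 ^ s"
  show ?thesis
  proof (intro exI allI impI)
    fix n :: nat assume nN: "N \<le> n" and ne: "even n"
    define m where "m = n - s"
    define B where "B = c / real m"
    define k where "k = nat \<lfloor>xi * real m\<rfloor>"
    have sn: "s < n" and n2s: "2 * s \<le> n" using nN assms(2) unfolding N_def by auto
    have rm: "real m = real n - S" unfolding m_def S_def using sn by simp
    have m2: "m \<ge> 2" using nN unfolding N_def m_def by simp
    have mbig: "real m * (xi - rho) \<ge> 1"
    proof -
      have "real m \<ge> real (nat \<lceil>1 / (xi - rho)\<rceil>)" using nN unfolding N_def m_def by simp
      also have "real (nat \<lceil>1 / (xi - rho)\<rceil>) \<ge> 1 / (xi - rho)" by linarith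
      finally have "real m \<ge> 1 / (xi - rho)" .
      then show ?thesis using xi1 by (simp add: field_simps)
    qed
    have mpos: "real m > 0" using m2 by simp
    have B0: "B > 0" unfolding B_def using c0 mpos by simp
    have mB: "real m * B = c" unfolding B_def using mpos by simp
    have xim0: "xi * real m \<ge> 0" using xi1 rho0 mpos by simp
    have k1: "real k \<le> xi * real m" unfolding k_def using xim0 by linarith
    have k2: "real k > xi * real m - 1" unfolding k_def using xim0 by linarith
    have ax: "inst s n A B (G_star s eps n)"
    proof (unfold_locales)
      fix i
      show "G_star s eps n i = (if i < s then A else B)"
      proof (cases "i < s")
        case True then show ?thesis unfolding G_star_def A_def S_def by simp
      next
        case False
        have "(real s - 1) / (real n - real s) * (1 / (2 * real s - 1) + eps / (2 * (real s - 1)))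
            = c / real m"
        proof -
          have h1: "(S - 1) * (1 / (2 * S - 1) + eps / (2 * (S - 1))) = c"
          proof -
            have "S - 1 \<noteq> 0" using S2 by simp
            then have q: "(S - 1) * (eps / (2 * (S - 1))) = eps / 2" by (simp add: field_simps)
            show ?thesis unfolding c_def distrib_left q by simp
          qed
          have "(S - 1) / (real n - S) * (1 / (2 * S - 1) + eps / (2 * (S - 1)))
              = (S - 1) * (1 / (2 * S - 1) + eps / (2 * (S - 1))) / (real n - S)"
            by (rule times_divide_eq_left)
          also have "\<dots> = c / real m" unfolding h1 rm ..
          finally show ?thesis unfolding S_def .
        qed
        then show ?thesis using False unfolding G_star_def B_def by simp
      qed
    next
      show "A > 0" by (rule RF(1))
      show "B > 0" by (rule B0)
      show "even s" by (rule assms(1))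
      show "even n" by (rule ne)
      show "s < n" by (rule sn)
      show "2 \<le> s" by (rule assms(2))
    qed
    interpret I0: inst s n A B "G_star s eps n" by (rule ax)
    have m_eq: "inst.m s n = m" using I0.m_def m_def by simp
    interpret I: inst2 s n A B "G_star s eps n" p0 k
    proof (intro inst2.intro[OF ax] inst2_axioms.intro, unfold m_eq)
      show "(real s - 1) * A < real m * B" using RF(3) mB unfolding S_def by simp
      show "real k * B < A"
      proof -
        have "xi * real m < al * real m" using xi1 mpos by (intro mult_strict_right_mono) auto
        then have "real k < al * real m" using k1 by linarith
        then have "real k * B < al * real m * B" using B0 by simp
        also have "\<dots> = A" unfolding al_def using mB RF by (simp add: field_simps)
        finally show ?thesis .
      qed
      show "real m * B - (real s - 1) * A < real k * B"
      proof -
        have "real k > rho * real m" using k2 mbig by (simp add: algebra_simps)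
        then have "real k * B > rho * real m * B" using B0 by simp
        moreover have "rho * real m * B = real m * B - (real s - 1) * A"
        proof -
          have "rho * real m * B = rho * c" using mB by (simp add: mult.assoc)
          also have "\<dots> = c - (S - 1) * A" unfolding rho_def using c0 by simp
          finally show ?thesis using mB unfolding S_def by simp
        qed
        ultimately show ?thesis by simp
      qed
      show "2 * k \<le> m"
      proof -
        have "xi * real m \<le> 1 / 2 * real m" using xi1 mpos by (intro mult_right_mono) auto
        then have "real k \<le> real m / 2" using k1 by linarith
        then show ?thesis by linarith
      qed
      then show "Suc k \<le> m" using m2 by linarith
      show "p0 > 0" by (rule p0_pos)
      show "p0 \<le> A / (2 * B * real n)"
      proof -
        have "A / (2 * B * real n) = A * real m / (2 * c * real n)" unfolding B_def using mpos by (simp add: field_simps)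
        also have "\<dots> \<ge> A / (4 * c)"
        proof -
          have "2 * real m \<ge> real n" using n2s rm unfolding S_def by simp
          then have "A * real n \<le> A * (2 * real m)" using RF by (intro mult_left_mono) auto
          then show ?thesis using RF sn by (simp add: field_simps)
        qed
        finally show ?thesis unfolding p0_def by linarith
      qed
      show "p0 \<le> real s * real (Suc k) / (2 ^ s * real m)"
      proof -
        have "real (Suc k) \<ge> xi * real m" using k2 by simp
        then have "real s * real (Suc k) \<ge> real s * (xi * real m)" by (intro mult_left_mono) auto
        then have "real s * real (Suc k) / (2 ^ s * real m) \<ge> real s * (xi * real m) / (2 ^ s * real m)"
          by (intro divide_right_mono) auto
        moreover have "real s * (xi * real m) / (2 ^ s * real m) = S * xi / 2 ^ s" unfolding S_def using mpos by simp
        ultimately show ?thesis unfolding p0_def by linarith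
      qed
    qed
    define K2 where "K2 = real n * (2 ^ s * (real n + 1))"
    have "expected_runtime (G_star s eps n) n \<le>
        ennreal (1 + (real ((s + 1) * (m + 1)) * (real n / p0) + real (2 * (s + 1)) * K2))"
      using I.exp_bound unfolding m_eq I.K2_def K2_def .
    also have "\<dots> \<le> ennreal (C * real n ^ 2)"
    proof (rule ennreal_leI)
      have n1: "real n \<ge> 1" using sn by simp
      have "real (m + 1) \<le> real n" unfolding m_def using sn assms(2) by simp
      then have "(real s + 1) * real (m + 1) \<le> (real s + 1) * real n"
        by (intro mult_left_mono) auto
      then have "real ((s + 1) * (m + 1)) \<le> (S + 1) * real n" unfolding S_def
        by (simp only: of_nat_mult of_nat_add of_nat_1)
      then have "real ((s + 1) * (m + 1)) * (real n / p0) \<le> (S + 1) * real n * (real n / p0)"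
        using p0_pos by (intro mult_right_mono) auto
      also have "\<dots> = (S + 1) / p0 * real n ^ 2" by (simp add: power2_eq_square)
      finally have t1: "real ((s + 1) * (m + 1)) * (real n / p0) \<le> (S + 1) / p0 * real n ^ 2" .
      have "K2 \<le> real n * (2 ^ s * (2 * real n))" unfolding K2_def using n1 by (intro mult_left_mono) auto
      then have "real (2 * (s + 1)) * K2 \<le> real (2 * (s + 1)) * (real n * (2 ^ s * (2 * real n)))"
        by (intro mult_left_mono) auto
      also have "\<dots> = 4 * (S + 1) * 2 ^ s * real n ^ 2" unfolding S_def by (simp add: power2_eq_square algebra_simps)
      finally have t2: "real (2 * (s + 1)) * K2 \<le> 4 * (S + 1) * 2 ^ s * real n ^ 2" .
      have t0: "1 \<le> real n ^ 2" using n1 by simp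
      show "1 + (real ((s + 1) * (m + 1)) * (real n / p0) + real (2 * (s + 1)) * K2) \<le> C * real n ^ 2"
        unfolding C_def using t0 t1 t2 by (simp add: algebra_simps)
    qed
    finally show "expected_runtime (G_star s eps n) n \<le> ennreal (C * real n ^ 2)" .
  qed
qed


end
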